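(* Let $n\ge 2$ be an integer, let $Z$ be a finite set and let $T_1,T_2$ be rooted $Z$-trees with $\mathrm{Seq}(T_1)=\mathrm{Seq}(T_2)$. Let $Q_1,\dots,Q_k$ and $R_1,\dots,R_m$ be as defined in the context, and suppose $|Q_j|<|Z|/\log n$ and $|R_l|<|Z|/\log n$ for all $1\le j\le k$, $1\le l\le m$. Then there is a set $A\subseteq Z$ with $|A|\ge\log n$ such that the unrooted trees obtained from $T_1|A$ and $T_2|A$ by suppressing the root are identical, and they are caterpillars.
   Context: A rooted $Z$-tree is a binary rooted tree with a root of degree two, all other internal nodes of degree three, leaves bijectively labeled by $Z$, and each internal node having a designated left child and right child. For a node $v$, $T_v$ is the subtree rooted at $v$; $\mathrm{Le}(\cdot)$ is the leaf set; the size $|T|$ of a tree is its number of leaves. For $A\subseteq Z$, $T|A$ is the rooted tree obtained from the minimal subtree spanning $A$, rooted at the least common ancestor of $A$, by suppressing non-root degree-two nodes. $\mathrm{Seq}(T)$ is the left-to-right leaf ordering given by pre-order traversal (left child before right child). Let $P_1=(u_1,\dots,u_k)$ be the path in $T_1$ from its left-most leaf $u_1$ to its root $u_k$; $Q_1:=$ the one-leaf tree $u_1$ and for $2\le j\le k$, $Q_j:=(T_1)_c$ with $c$ the child of $u_j$ other than $u_{j-1}$. Let $P_2=(w_1,\dots,w_m)$ be the path in $T_2$ from its root $w_1$ to its right-most leaf $w_m$; $R_m:=$ the one-leaf tree $w_m$ and for $1\le l<m$, $R_l:=(T_2)_c$ with $c$ the child of $w_l$ other than $w_{l+1}$. Unrooted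 trees are identical if there is a label-preserving graph isomorphism; a tree is a caterpillar if every internal node is adjacent to at least one leaf. $\log=\log_2$. *)

theory Defs
  imports Complex_Main
begin

datatype 'a rtree = Leaf 'a | Node "'a rtree" "'a rtree"

fun Seq :: "'a rtree \<Rightarrow> 'a list" where
  "Seq (Leaf a) = [a]"
| "Seq (Node l r) = Seq l @ Seq r"

definition is_Z_tree :: "'a set \<Rightarrow> 'a rtree \<Rightarrow> bool" where
  "is_Z_tree Z T \<longleftrightarrow> distinct (Seq T) \<and> set (Seq T) = Z"

definition tsize :: "'a rtree \<Rightarrow> nat" where
  "tsize T = length (Seq T)"

text \<open>Q_1,...,Q_k: the left-most leaf, then the right subtrees hanging off the path
  from the left-most leaf up to the root (in this order).\<close>
fun Qparts :: "'a rtree \<Rightarrow> 'a rtree list" where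
  "Qparts (Leaf a) = [Leaf a]"
| "Qparts (Node l r) = Qparts l @ [r]"

text \<open>R_1,...,R_m: the left subtrees hanging off the path from the root down to the
  right-most leaf, then the right-most leaf.\<close>
fun Rparts :: "'a rtree \<Rightarrow> 'a rtree list" where
  "Rparts (Leaf a) = [Leaf a]"
| "Rparts (Node l r) = l # Rparts r"

text \<open>T|A: restriction to the leaves in A, rooted at the lca, suppressing degree-two
  nodes (None if no leaf lies in A).\<close>
fun restrict :: "'a set \<Rightarrow> 'a rtree \<Rightarrow> 'a rtree option" where
  "restrict A (Leaf a) = (if a \<in> A then Some (Leaf a) else None)"
| "restrict A (Node l r) =
     (case (restrict A l, restrict A r) of
        (None, x) \<Rightarrow> x
      | (Some l', None) \<Rightarrow> Some l'
      | (Some l', Some r') \<Rightarrow> Some (Node l' r'))"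

text \<open>Nodes of a rooted tree are addressed by positions (paths from the root,
  False = left, True = right).\<close>
fun positions :: "'a rtree \<Rightarrow> bool list set" where
  "positions (Leaf a) = {[]}"
| "positions (Node l r) =
     {[]} \<union> Cons False ` positions l \<union> Cons True ` positions r"

fun label_at :: "'a rtree \<Rightarrow> bool list \<Rightarrow> 'a option" where
  "label_at (Leaf a) [] = Some a"
| "label_at (Leaf a) (_ # _) = None"
| "label_at (Node l r) [] = None"
| "label_at (Node l r) (False # p) = label_at l p"
| "label_at (Node l r) (True # p) = label_at r p"

definition redges :: "'a rtree \<Rightarrow> bool list set set" where
  "redges t = {{p, p @ [b]} | p b. p @ [b] \<in> positions t}"

text \<open>The unrooted tree obtained by suppressing the (degree-two) root:
  vertices, edges; leaves are the labelled vertices (via label_at).\<close>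
fun uverts :: "'a rtree \<Rightarrow> bool list set" where
  "uverts (Leaf a) = {[]}"
| "uverts (Node l r) = positions (Node l r) - {[]}"

fun uedges :: "'a rtree \<Rightarrow> bool list set set" where
  "uedges (Leaf a) = {}"
| "uedges (Node l r) =
     {e \<in> redges (Node l r). [] \<notin> e} \<union> {{[False], [True]}}"

definition unrooted_identical :: "'a rtree \<Rightarrow> 'a rtree \<Rightarrow> bool" where
  "unrooted_identical t1 t2 \<longleftrightarrow>
     (\<exists>f. bij_betw f (uverts t1) (uverts t2) \<and>
          (\<forall>u\<in>uverts t1. \<forall>v\<in>uverts t1. {u, v} \<in> uedges t1 \<longleftrightarrow> {f u, f v} \<in> uedges t2) \<and>
          (\<forall>v\<in>uverts t1. label_at t2 (f v) = label_at t1 v))"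

definition caterpillar :: "'a rtree \<Rightarrow> bool" where
  "caterpillar t \<longleftrightarrow>
     (\<forall>v\<in>uverts t. label_at t v = None \<longrightarrow>
        (\<exists>u\<in>uverts t. {u, v} \<in> uedges t \<and> label_at t u \<noteq> None))"

end

theory Submission imports Defs begin

lemma pos_F[simp]: "False # p \<in> positions (Node l r) \<longleftrightarrow> p \<in> positions l" by auto
lemma pos_T[simp]: "True # p \<in> positions (Node l r) \<longleftrightarrow> p \<in> positions r" by auto
lemma pos_Nil[simp]: "[] \<in> positions t" by (cases t) auto
lemma pos_Leaf[simp]: "p \<in> positions (Leaf a) \<longleftrightarrow> p = []" by auto

lemma redges_iff: "{u,v} \<in> redges t \<longleftrightarrow>
   (\<exists>b. v = u@[b] \<and> v \<in> positions t) \<or> (\<exists>b. u = v@[b] \<and> u \<in> positions t)"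
  unfolding redges_def by (auto simp: doubleton_eq_iff)

lemma uedges_Node: "{u,v} \<in> uedges (Node l r) \<longleftrightarrow>
   ({u,v} \<in> redges (Node l r) \<and> u \<noteq> [] \<and> v \<noteq> []) \<or> {u,v} = {[False],[True]}"
  by auto

lemma uverts_Node: "v \<in> uverts (Node l r) \<longleftrightarrow> v \<in> positions (Node l r) \<and> v \<noteq> []"
  by auto

fun rotf :: "bool list \<Rightarrow> bool list" where
  "rotf (False#False#q) = False#q"
| "rotf (False#True#q) = True#False#q"
| "rotf [False] = [True]"
| "rotf (True#q) = True#True#q"
| "rotf [] = []"

fun rotg :: "bool list \<Rightarrow> bool list" where
  "rotg (False#q) = False#False#q"
| "rotg (True#False#q) = False#True#q"
| "rotg [True] = [False]"
| "rotg (True#True#q) = True#q"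
| "rotg [] = []"

lemma rotg_rotf[simp]: "rotg (rotf p) = p" by (induction p rule: rotf.induct) auto
lemma rotf_rotg[simp]: "rotf (rotg p) = p" by (induction p rule: rotg.induct) auto

lemma rot_label: "label_at (Node a (Node b c)) (rotf v) = label_at (Node (Node a b) c) v"
  by (induction v rule: rotf.induct) auto

lemma rot_verts: "v \<in> uverts (Node (Node a b) c) \<longleftrightarrow> rotf v \<in> uverts (Node a (Node b c))"
  by (induction v rule: rotf.induct) auto

lemma snoc_cases: "(x#u)@[b] = x#(u@[b])" by simp

lemma rot_edge:
  assumes "u \<in> uverts (Node (Node a b) c)" "v \<in> uverts (Node (Node a b) c)"
  shows "{u,v} \<in> uedges (Node (Node a b) c) \<longleftrightarrow> {rotf u, rotf v} \<in> uedges (Node a (Node b c))"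
  using assms
  apply (simp only: uedges_Node redges_iff uverts_Node)
  apply (induction u rule: rotf.induct; induction v rule: rotf.induct)
  apply (auto simp: doubleton_eq_iff)
  done


lemma rot_ui: "unrooted_identical (Node (Node a b) c) (Node a (Node b c))"
  unfolding unrooted_identical_def
proof (intro exI conjI ballI)
  show "bij_betw rotf (uverts (Node (Node a b) c)) (uverts (Node a (Node b c)))"
    by (rule bij_betw_byWitness[where f'=rotg]) (auto simp: rot_verts[symmetric])
  show "label_at (Node a (Node b c)) (rotf v) = label_at (Node (Node a b) c) v" for v
    by (rule rot_label)
  show "({u, v} \<in> uedges (Node (Node a b) c)) = ({rotf u, rotf v} \<in> uedges (Node a (Node b c)))"
    if "u \<in> uverts (Node (Node a b) c)" "v \<in> uverts (Node (Node a b) c)" for u v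
    using rot_edge that by blast
qed

lemma ui_trans: "unrooted_identical t1 t2 \<Longrightarrow> unrooted_identical t2 t3 \<Longrightarrow> unrooted_identical t1 t3"
  unfolding unrooted_identical_def
proof (elim exE conjE)
  fix f g
  assume f1: "bij_betw f (uverts t1) (uverts t2)"
    and f2: "\<forall>u\<in>uverts t1. \<forall>v\<in>uverts t1. ({u, v} \<in> uedges t1) = ({f u, f v} \<in> uedges t2)"
    and f3: "\<forall>v\<in>uverts t1. label_at t2 (f v) = label_at t1 v"
    and g1: "bij_betw g (uverts t2) (uverts t3)"
    and g2: "\<forall>u\<in>uverts t2. \<forall>v\<in>uverts t2. ({u, v} \<in> uedges t2) = ({g u, g v} \<in> uedges t3)"
    and g3: "\<forall>v\<in>uverts t2. label_at t3 (g v) = label_at t2 v"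
  have m: "v \<in> uverts t1 \<Longrightarrow> f v \<in> uverts t2" for v using f1 bij_betwE by blast
  show "\<exists>h. bij_betw h (uverts t1) (uverts t3) \<and>
        (\<forall>u\<in>uverts t1. \<forall>v\<in>uverts t1. ({u, v} \<in> uedges t1) = ({h u, h v} \<in> uedges t3)) \<and>
        (\<forall>v\<in>uverts t1. label_at t3 (h v) = label_at t1 v)"
    apply (rule exI[of _ "g o f"])
    using bij_betw_trans[OF f1 g1] f2 f3 g2 g3 m by auto
qed

lemma ui_refl: "unrooted_identical t t"
  unfolding unrooted_identical_def by (rule exI[of _ id]) auto

fun RC :: "'a list \<Rightarrow> 'a rtree" where
  "RC [] = undefined"
| "RC [a] = Leaf a"
| "RC (a#b#xs) = Node (Leaf a) (RC (b#xs))"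

fun LCr :: "'a list \<Rightarrow> 'a rtree" where
  "LCr [] = undefined"
| "LCr [a] = Leaf a"
| "LCr (a#b#xs) = Node (LCr (b#xs)) (Leaf a)"

definition LC :: "'a list \<Rightarrow> 'a rtree" where "LC xs = LCr (rev xs)"

lemma LC_snoc: "ys \<noteq> [] \<Longrightarrow> LC (ys @ [y]) = Node (LC ys) (Leaf y)"
  unfolding LC_def by (cases "rev ys") auto
lemma LC_single: "LC [y] = Leaf y" unfolding LC_def by simp
lemma RC_cons: "zs \<noteq> [] \<Longrightarrow> RC (z # zs) = Node (Leaf z) (RC zs)"
  by (cases zs) auto

lemma chain: "ys \<noteq> [] \<Longrightarrow> zs \<noteq> [] \<Longrightarrow> unrooted_identical (Node (LC ys) (RC zs)) (RC (ys @ zs))"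
proof (induction ys arbitrary: zs rule: rev_induct)
  case Nil then show ?case by simp
next
  case (snoc y ys)
  show ?case
  proof (cases "ys = []")
    case True then show ?thesis using snoc by (simp add: LC_single RC_cons ui_refl)
  next
    case False
    have "unrooted_identical (Node (LC (ys@[y])) (RC zs)) (Node (LC ys) (Node (Leaf y) (RC zs)))"
      using False by (simp add: LC_snoc rot_ui)
    moreover have "Node (Leaf y) (RC zs) = RC (y # zs)" using snoc by (simp add: RC_cons)
    moreover have "unrooted_identical (Node (LC ys) (RC (y#zs))) (RC (ys @ y # zs))"
      using snoc False by blast
    ultimately show ?thesis using ui_trans by fastforce
  qed
qed

lemma LC_RC_ui: "xs \<noteq> [] \<Longrightarrow> unrooted_identical (LC xs) (RC xs)"
proof (cases xs rule: rev_cases)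
  case (snoc ys y)
  assume "xs \<noteq> []"
  show ?thesis
  proof (cases "ys = []")
    case True then show ?thesis using snoc by (simp add: LC_single ui_refl)
  next
    case False
    then have "LC xs = Node (LC ys) (RC [y])" using snoc by (simp add: LC_snoc)
    then show ?thesis using chain[OF False, of "[y]"] snoc by simp
  qed
qed simp

definition goodleaf :: "'a rtree \<Rightarrow> bool" where
  "goodleaf t \<longleftrightarrow> (\<forall>q\<in>positions t. label_at t q = None \<longrightarrow>
      (\<exists>b. q@[b] \<in> positions t \<and> label_at t (q@[b]) \<noteq> None))"

lemma goodleaf_cat: "goodleaf t \<Longrightarrow> caterpillar t"
proof (cases t)
  case (Leaf a) then show ?thesis by (simp add: caterpillar_def)
next
  case (Node l r)
  assume g: "goodleaf t"
  show ?thesis unfolding caterpillar_def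
  proof (intro ballI impI)
    fix v assume v: "v \<in> uverts t" "label_at t v = None"
    then have vp: "v \<in> positions t" "v \<noteq> []" using Node uverts_Node by auto
    then obtain b where b: "v@[b] \<in> positions t" "label_at t (v@[b]) \<noteq> None"
      using g v unfolding goodleaf_def by blast
    have "{v@[b], v} \<in> uedges t" using Node b vp by (auto simp: redges_iff)
    moreover have "v@[b] \<in> uverts t" using Node b by auto
    ultimately show "\<exists>u\<in>uverts t. {u, v} \<in> uedges t \<and> label_at t u \<noteq> None" using b by blast
  qed
qed

lemma goodleaf_Node_leafR: "goodleaf l \<Longrightarrow> goodleaf (Node l (Leaf a))"
  unfolding goodleaf_def
proof (intro ballI impI)
  fix q assume g: "\<forall>q\<in>positions l. label_at l q = None \<longrightarrow> (\<exists>b. q @ [b] \<in> positions l \<and> label_at l (q @ [b]) \<noteq> None)"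
    and q: "q \<in> positions (Node l (Leaf a))" "label_at (Node l (Leaf a)) q = None"
  show "\<exists>b. q @ [b] \<in> positions (Node l (Leaf a)) \<and> label_at (Node l (Leaf a)) (q @ [b]) \<noteq> None"
  proof (cases q)
    case Nil then show ?thesis by (intro exI[of _ True]) simp
  next
    case (Cons x q')
    show ?thesis
    proof (cases x)
      case True then show ?thesis using q Cons by auto
    next
      case False
      then have "q' \<in> positions l" "label_at l q' = None" using q Cons by auto
      then obtain b where "q' @ [b] \<in> positions l" "label_at l (q' @ [b]) \<noteq> None" using g by blast
      then show ?thesis using Cons False by (intro exI[of _ b]) simp
    qed
  qed
qed

lemma goodleaf_Node_leafL: "goodleaf r \<Longrightarrow> goodleaf (Node (Leaf a) r)"
  unfolding goodleaf_def
proof (intro ballI impI)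
  fix q assume g: "\<forall>q\<in>positions r. label_at r q = None \<longrightarrow> (\<exists>b. q @ [b] \<in> positions r \<and> label_at r (q @ [b]) \<noteq> None)"
    and q: "q \<in> positions (Node (Leaf a) r)" "label_at (Node (Leaf a) r) q = None"
  show "\<exists>b. q @ [b] \<in> positions (Node (Leaf a) r) \<and> label_at (Node (Leaf a) r) (q @ [b]) \<noteq> None"
  proof (cases q)
    case Nil then show ?thesis by (intro exI[of _ False]) simp
  next
    case (Cons x q')
    show ?thesis
    proof (cases x)
      case False then show ?thesis using q Cons by auto
    next
      case True
      then have "q' \<in> positions r" "label_at r q' = None" using q Cons by auto
      then obtain b where "q' @ [b] \<in> positions r" "label_at r (q' @ [b]) \<noteq> None" using g by blast
      then show ?thesis using Cons True by (intro exI[of _ b]) simp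
    qed
  qed
qed

lemma goodleaf_Leaf: "goodleaf (Leaf a)" unfolding goodleaf_def by simp

lemma goodleaf_RC: "xs \<noteq> [] \<Longrightarrow> goodleaf (RC xs)"
  by (induction xs rule: RC.induct) (auto simp: goodleaf_Leaf goodleaf_Node_leafL)

lemma goodleaf_LCr: "xs \<noteq> [] \<Longrightarrow> goodleaf (LCr xs)"
  by (induction xs rule: LCr.induct) (auto simp: goodleaf_Leaf goodleaf_Node_leafR)

lemma cat_LC: "xs \<noteq> [] \<Longrightarrow> caterpillar (LC xs)"
  unfolding LC_def by (rule goodleaf_cat, rule goodleaf_LCr) simp
lemma cat_RC: "xs \<noteq> [] \<Longrightarrow> caterpillar (RC xs)"
  by (rule goodleaf_cat, rule goodleaf_RC)

lemma Seq_ne: "Seq t \<noteq> []" by (induction t) auto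

lemma restrict_None_iff: "restrict A t = None \<longleftrightarrow> filter (\<lambda>x. x \<in> A) (Seq t) = []"
  by (induction t) (auto split: option.splits)

lemma restrict_single: "filter (\<lambda>x. x \<in> A) (Seq t) = [a] \<Longrightarrow> restrict A t = Some (Leaf a)"
proof (induction t)
  case (Leaf x) then show ?case by (auto split: if_splits)
next
  case (Node l r)
  then have "(filter (\<lambda>x. x \<in> A) (Seq l) = [] \<and> filter (\<lambda>x. x \<in> A) (Seq r) = [a]) \<or>
             (filter (\<lambda>x. x \<in> A) (Seq l) = [a] \<and> filter (\<lambda>x. x \<in> A) (Seq r) = [])"
    by (auto simp: append_eq_Cons_conv)
  then show ?case using Node by (auto simp: restrict_None_iff[symmetric])
qed

lemma len_le1: "length xs \<le> 1 \<Longrightarrow> xs = [] \<or> (\<exists>a. xs = [a])"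
  by (cases xs) auto

lemma restrict_LC:
  "(\<forall>Q\<in>set (Qparts t). length (filter (\<lambda>x. x \<in> A) (Seq Q)) \<le> 1) \<Longrightarrow>
   filter (\<lambda>x. x \<in> A) (Seq t) \<noteq> [] \<Longrightarrow>
   restrict A t = Some (LC (filter (\<lambda>x. x \<in> A) (Seq t)))"
proof (induction t)
  case (Leaf x) then show ?case by (auto simp: LC_single split: if_splits)
next
  case (Node l r)
  let ?fl = "filter (\<lambda>x. x \<in> A) (Seq l)" and ?fr = "filter (\<lambda>x. x \<in> A) (Seq r)"
  have "length ?fr \<le> 1" using Node.prems by simp
  then consider "?fr = []" | a where "?fr = [a]" using len_le1 by blast
  then show ?case
  proof cases
    case 1
    then have "restrict A r = None" by (simp add: restrict_None_iff)
    moreover have "restrict A l = Some (LC ?fl)" using Node 1 by simp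
    ultimately show ?thesis using 1 by simp
  next
    case (2 a)
    then have ra: "restrict A r = Some (Leaf a)" by (rule restrict_single)
    show ?thesis
    proof (cases "?fl = []")
      case True
      have "restrict A l = None" using True by (simp add: restrict_None_iff)
      then show ?thesis using ra 2 True by (simp add: LC_single)
    next
      case False
      then have "restrict A l = Some (LC ?fl)" using Node by simp
      then show ?thesis using ra 2 False by (simp add: LC_snoc)
    qed
  qed
qed

lemma restrict_RC:
  "(\<forall>R\<in>set (Rparts t). length (filter (\<lambda>x. x \<in> A) (Seq R)) \<le> 1) \<Longrightarrow>
   filter (\<lambda>x. x \<in> A) (Seq t) \<noteq> [] \<Longrightarrow>
   restrict A t = Some (RC (filter (\<lambda>x. x \<in> A) (Seq t)))"
proof (induction t)
  case (Leaf x) then show ?case by (auto split: if_splits)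
next
  case (Node l r)
  let ?fl = "filter (\<lambda>x. x \<in> A) (Seq l)" and ?fr = "filter (\<lambda>x. x \<in> A) (Seq r)"
  have "length ?fl \<le> 1" using Node.prems by simp
  then consider "?fl = []" | a where "?fl = [a]" using len_le1 by blast
  then show ?case
  proof cases
    case 1
    then have "restrict A l = None" by (simp add: restrict_None_iff)
    moreover have "restrict A r = Some (RC ?fr)" using Node 1 by simp
    ultimately show ?thesis using 1 by simp
  next
    case (2 a)
    then have ra: "restrict A l = Some (Leaf a)" by (rule restrict_single)
    show ?thesis
    proof (cases "?fr = []")
      case True
      have "restrict A r = None" using True by (simp add: restrict_None_iff)
      then show ?thesis using ra 2 True by simp
    next
      case False
      then have "restrict A r = Some (RC ?fr)" using Node by simp
      then show ?thesis using ra 2 False by (simp add: RC_cons)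
    qed
  qed
qed

lemma Qseg: "Q \<in> set (Qparts t) \<Longrightarrow> \<exists>pre post. Seq t = pre @ Seq Q @ post"
proof (induction t)
  case (Leaf x) then show ?case by auto
next
  case (Node l r)
  show ?case
  proof (cases "Q = r")
    case True then show ?thesis by (intro exI[of _ "Seq l"] exI[of _ "[]"]) simp
  next
    case False
    then have "Q \<in> set (Qparts l)" using Node.prems by simp
    then obtain pre post where "Seq l = pre @ Seq Q @ post" using Node.IH by blast
    then show ?thesis by (intro exI[of _ pre] exI[of _ "post @ Seq r"]) simp
  qed
qed

lemma Rseg: "R \<in> set (Rparts t) \<Longrightarrow> \<exists>pre post. Seq t = pre @ Seq R @ post"
proof (induction t)
  case (Leaf x) then show ?case by auto
next
  case (Node l r)
  show ?case
  proof (cases "R = l")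
    case True then show ?thesis by (intro exI[of _ "[]"] exI[of _ "Seq r"]) simp
  next
    case False
    then have "R \<in> set (Rparts r)" using Node.prems by simp
    then obtain pre post where "Seq r = pre @ Seq R @ post" using Node.IH by blast
    then show ?thesis by (intro exI[of _ "Seq l @ pre"] exI[of _ post]) simp
  qed
qed

lemma idx_in_seg:
  assumes "distinct (pre @ m @ post)" "i < length (pre @ m @ post)" "(pre @ m @ post) ! i \<in> set m"
  shows "length pre \<le> i \<and> i < length pre + length m"
proof -
  obtain k where k: "k < length m" "m ! k = (pre @ m @ post) ! i" using assms(3) by (metis in_set_conv_nth)
  have e: "(pre @ m @ post) ! (length pre + k) = (pre @ m @ post) ! i" using k by (simp add: nth_append)
  have lt: "length pre + k < length (pre @ m @ post)" using k by simp
  have "length pre + k = i" using nth_eq_iff_index_eq[OF assms(1) lt assms(2)] e by blast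
  then show ?thesis using k by simp
qed

lemma hit:
  assumes d: "distinct S" and S: "S = pre @ m @ post" and ls: "length m \<le> s" and s: "0 < s"
    and J: "\<forall>j\<in>J. j * s < length S" and A: "A = (\<lambda>j. S ! (j * s)) ` J"
  shows "length (filter (\<lambda>x. x \<in> A) m) \<le> 1"
proof -
  have dm: "distinct m" using d S by simp
  have "length (filter (\<lambda>x. x \<in> A) m) = card (set (filter (\<lambda>x. x \<in> A) m))"
    using dm by (metis distinct_card distinct_filter)
  also have "\<dots> \<le> 1"
  proof -
    have "\<forall>x\<in>set (filter (\<lambda>x. x \<in> A) m). \<forall>y\<in>set (filter (\<lambda>x. x \<in> A) m). x = y"
    proof (intro ballI)
      fix x y assume x: "x \<in> set (filter (\<lambda>x. x \<in> A) m)" and y: "y \<in> set (filter (\<lambda>x. x \<in> A) m)"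
      obtain j where j: "j \<in> J" "x = S ! (j*s)" using x A by auto
      obtain j' where j': "j' \<in> J" "y = S ! (j'*s)" using y A by auto
      have d': "distinct (pre@m@post)" using d S by simp
      have xm: "(pre@m@post) ! (j*s) \<in> set m" using x j S by simp
      have ym: "(pre@m@post) ! (j'*s) \<in> set m" using y j' S by simp
      have jl: "j*s < length (pre@m@post)" using J j S by blast
      have jl': "j'*s < length (pre@m@post)" using J j' S by blast
      have a: "length pre \<le> j*s \<and> j*s < length pre + length m"
        by (rule idx_in_seg[OF d' jl xm])
      have b: "length pre \<le> j'*s \<and> j'*s < length pre + length m"
        by (rule idx_in_seg[OF d' jl' ym])
      have "j = j'"
      proof (rule ccontr)
        assume "j \<noteq> j'"
        then have "j < j' \<or> j' < j" by auto
        then show False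
        proof
          assume "j < j'" then have "(j+1)*s \<le> j'*s" using s by (intro mult_right_mono) auto
          then show False using a b ls by simp
        next
          assume "j' < j" then have "(j'+1)*s \<le> j*s" using s by (intro mult_right_mono) auto
          then show False using a b ls by simp
        qed
      qed
      then show "x = y" using j j' by simp
    qed
    then show ?thesis using card_le_Suc0_iff_eq[of "set (filter (\<lambda>x. x \<in> A) m)"] by simp
  qed
  finally show ?thesis .
qed

lemma Qparts_ne: "Qparts t \<noteq> []" by (cases t) auto

theorem lemma2:
  fixes n :: nat and Z :: "'a set" and T1 T2 :: "'a rtree"
  assumes "n \<ge> 2"
    and "finite Z"
    and "is_Z_tree Z T1" and "is_Z_tree Z T2"
    and "Seq T1 = Seq T2"
    and "\<forall>Q \<in> set (Qparts T1). real (tsize Q) < real (card Z) / log 2 (real n)"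
    and "\<forall>R \<in> set (Rparts T2). real (tsize R) < real (card Z) / log 2 (real n)"
  shows "\<exists>A \<subseteq> Z. real (card A) \<ge> log 2 (real n) \<and>
           (\<exists>t1 t2. restrict A T1 = Some t1 \<and> restrict A T2 = Some t2 \<and>
                    unrooted_identical t1 t2 \<and> caterpillar t1 \<and> caterpillar t2)"
proof -
  define S where "S = Seq T1"
  have dS: "distinct S" and setS: "set S = Z" using assms(3) unfolding S_def is_Z_tree_def by auto
  have S2: "Seq T2 = S" using assms(5) S_def by simp
  define N where "N = length S"
  have cardZ: "card Z = N" using dS setS N_def distinct_card by blast
  have N1: "N \<ge> 1" unfolding N_def S_def using Seq_ne[of T1] by (simp add: Suc_le_eq)
  define L where "L = log 2 (real n)"
  have L1: "L \<ge> 1" unfolding L_def using assms(1) by (simp add: le_log_iff)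
  define U where "U = set (Qparts T1) \<union> set (Rparts T2)"
  have Ufin: "finite U" and Une: "U \<noteq> {}" unfolding U_def using Qparts_ne[of T1] by auto
  define s where "s = Max (tsize ` U)"
  have sbound: "\<And>Q. Q \<in> U \<Longrightarrow> tsize Q \<le> s" unfolding s_def using Ufin by simp
  have sin: "s \<in> tsize ` U" unfolding s_def using Ufin Une by simp
  then obtain Q0 where Q0: "Q0 \<in> U" "s = tsize Q0" by blast
  have s0: "s > 0" using Q0 Seq_ne[of Q0] unfolding tsize_def by simp
  have "real s < real N / L" using Q0 assms(6,7) cardZ unfolding U_def L_def by auto
  then have sL: "real s * L < real N" using L1 by (simp add: pos_less_divide_eq)
  define c where "c = (N + s - 1) div s"
  have cs1: "c * s \<le> N + s - 1" unfolding c_def by (metis div_times_less_eq_dividend)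
  have cs2: "N + s - 1 < c * s + s"
    unfolding c_def using s0 by (metis add.commute div_mult_mod_eq mod_less_divisor nat_add_left_cancel_less)
  have jN: "\<forall>j\<in>{..<c}. j * s < N"
  proof
    fix j assume "j \<in> {..<c}"
    then have "(j+1) * s \<le> c * s" by (intro mult_right_mono) auto
    then show "j * s < N" using cs1 s0 N1 by simp
  qed
  have Nc: "N \<le> c * s" using cs2 s0 by simp
  define A where "A = (\<lambda>j. S ! (j * s)) ` {..<c}"
  have AZ: "A \<subseteq> Z" unfolding A_def using jN setS N_def by auto
  have inj: "inj_on (\<lambda>j. S ! (j * s)) {..<c}"
  proof (rule inj_onI)
    fix j j' assume j: "j \<in> {..<c}" "j' \<in> {..<c}" and e: "S ! (j * s) = S ! (j' * s)"
    have "j * s = j' * s" using nth_eq_iff_index_eq[OF dS] jN j e N_def by simp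
    then show "j = j'" using s0 by simp
  qed
  have cardA: "card A = c" unfolding A_def using card_image[OF inj] by simp
  have "real s * L < real c * real s" using sL Nc
    by (metis (mono_tags, opaque_lifting) le_less_trans mult.commute of_nat_le_iff of_nat_mult order_less_le_trans)
  then have cL: "L < real c" using s0 by (simp add: mult.commute)
  have Qc: "\<forall>Q\<in>set (Qparts T1). length (filter (\<lambda>x. x \<in> A) (Seq Q)) \<le> 1"
  proof
    fix Q assume Q: "Q \<in> set (Qparts T1)"
    then obtain pre post where pp: "S = pre @ Seq Q @ post" using Qseg S_def by blast
    have "length (Seq Q) \<le> s" using sbound[of Q] Q unfolding U_def tsize_def by simp
    then show "length (filter (\<lambda>x. x \<in> A) (Seq Q)) \<le> 1"
      using hit[OF dS pp _ s0 _ A_def] jN N_def by blast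
  qed
  have Rc: "\<forall>R\<in>set (Rparts T2). length (filter (\<lambda>x. x \<in> A) (Seq R)) \<le> 1"
  proof
    fix R assume R: "R \<in> set (Rparts T2)"
    then obtain pre post where pp: "S = pre @ Seq R @ post" using Rseg S2 by metis
    have "length (Seq R) \<le> s" using sbound[of R] R unfolding U_def tsize_def by simp
    then show "length (filter (\<lambda>x. x \<in> A) (Seq R)) \<le> 1"
      using hit[OF dS pp _ s0 _ A_def] jN N_def by blast
  qed
  have c0: "0 < c" using Nc N1 by (cases c) auto
  then have "S ! 0 \<in> A" unfolding A_def by (intro image_eqI[of _ _ 0]) auto
  moreover have "S ! 0 \<in> set S" using Seq_ne[of T1] unfolding S_def by (intro nth_mem) simp
  ultimately have ne: "filter (\<lambda>x. x \<in> A) S \<noteq> []" by (auto simp: filter_empty_conv)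
  have r1: "restrict A T1 = Some (LC (filter (\<lambda>x. x \<in> A) S))"
    using restrict_LC[OF Qc] ne S_def by simp
  have r2: "restrict A T2 = Some (RC (filter (\<lambda>x. x \<in> A) S))"
    using restrict_RC[OF Rc] ne S2 by simp
  show ?thesis
    using AZ cardA cL r1 r2 LC_RC_ui[OF ne] cat_LC[OF ne] cat_RC[OF ne] unfolding L_def
    by (intro exI[of _ A]) auto
qed

end
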